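(* Let $\mu>0$, $\gamma\ge0$ and $x\ge\widetilde x\ge0$. Let $S$ and $\widetilde S$ be constructed as below from the same Brownian motion with drift $B^\mu$ and the same Poisson process $N^\gamma$, with initial values $x$ and $\widetilde x$ respectively, and let $T_{\mathrm{coupl}}=\inf\{t\ge0:S_t=\widetilde S_t\}$. Then for all $0\le\alpha\le\mu^2/2$, $$\mathbb E[e^{\alpha T_{\mathrm{coupl}}}]\le e^{x(\mu-\sqrt{\mu^2-2\alpha})}.$$
   Context: Let $B$ be a standard Brownian motion started at $0$ and $B^\mu_t=B_t+\mu t$. Let $N^\gamma$ be an independent Poisson point process on $\mathbb R\times[0,\infty)$ with intensity $\gamma\,dx\,dt$. Given an initial value $s_0\ge0$, define $\tau_0=0$, $S^{(0)}_t=\max\{s_0,\sup_{0\le s\le t}B^\mu_s\}$, and recursively for $n\ge1$: $\tau_n=\inf\{t>\tau_{n-1}: N^\gamma\cap([B^\mu_t,S^{(n-1)}_t]\times\{t\})\ne\emptyset\}$, $S^{(n)}_{\tau_n}$ the space coordinate of the (a.s. unique) point of $N^\gamma$ in $[B^\mu_{\tau_n},S^{(n-1)}_{\tau_n}]\times\{\tau_n\}$, and $S^{(n)}_t=\max\{S^{(n)}_{\tau_n},\sup_{\tau_n\le s\le t}B^\mu_s\}$ for $t\ge\tau_n$. Set $S_t=S^{(n)}_t$ for $t\in[\tau_n,\tau_{n+1})$. (With $R_t=\sum_{i=1}^n(S^{(i-1)}_{\tau_i}-S^{(i)}_{\tau_i})$ for $t\in[\tau_n,\tau_{n+1})$ and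 $X_t=R_t+S_t-B^\mu_t$, this gives the $(\gamma,\mu)$-Brownian ratchet started in $(s_0,0)$.) $S$ is the process with $s_0=x$ and $\widetilde S$ the one with $s_0=\widetilde x$. *)

theory Defs
  imports "HOL-Probability.Probability"
begin

text \<open>Standard Brownian motion on [0,inf) (paths indexed by real t, only t >= 0 relevant).\<close>
definition std_BM :: "'a measure \<Rightarrow> (real \<Rightarrow> 'a \<Rightarrow> real) \<Rightarrow> bool" where
  "std_BM M B \<longleftrightarrow> prob_space M \<and>
     (\<forall>t. B t \<in> borel_measurable M) \<and>
     (\<forall>\<omega>\<in>space M. B 0 \<omega> = 0 \<and> continuous_on {0..} (\<lambda>t. B t \<omega>)) \<and>
     (\<forall>s t. 0 \<le> s \<and> s < t \<longrightarrow>
        distributed M lborel (\<lambda>\<omega>. B t \<omega> - B s \<omega>)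
          (\<lambda>v. ennreal (normal_density 0 (sqrt (t - s)) v))) \<and>
     (\<forall>ts. sorted_wrt (<) ts \<and> (\<forall>t\<in>set ts. 0 \<le> t) \<longrightarrow>
        prob_space.indep_vars M (\<lambda>_. borel)
          (\<lambda>i \<omega>. B (ts ! Suc i) \<omega> - B (ts ! i) \<omega>) {..<length ts - 1})"

definition ppp_test_set :: "(real \<times> real) set \<Rightarrow> bool" where
  "ppp_test_set A \<longleftrightarrow> A \<in> sets (borel :: (real \<times> real) measure) \<and> A \<subseteq> UNIV \<times> {0..}
      \<and> emeasure (lborel :: (real \<times> real) measure) A < \<infinity>"

definition poisson_pp :: "'a measure \<Rightarrow> real \<Rightarrow> ('a \<Rightarrow> (real \<times> real) set) \<Rightarrow> bool" where
  "poisson_pp M \<gamma> N \<longleftrightarrow> prob_space M \<and>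
     (\<forall>\<omega>\<in>space M. N \<omega> \<subseteq> UNIV \<times> {0..}) \<and>
     (\<forall>A. ppp_test_set A \<longrightarrow>
        (AE \<omega> in M. finite (N \<omega> \<inter> A)) \<and>
        (\<lambda>\<omega>. card (N \<omega> \<inter> A)) \<in> measurable M (count_space UNIV) \<and>
        (\<forall>k::nat. measure M {\<omega>\<in>space M. card (N \<omega> \<inter> A) = k} =
           (\<gamma> * measure lborel A) ^ k / fact k * exp (- (\<gamma> * measure lborel A)))) \<and>
     (\<forall>\<A>. finite \<A> \<and> disjoint \<A> \<and> (\<forall>A\<in>\<A>. ppp_test_set A) \<longrightarrow>
        prob_space.indep_vars M (\<lambda>_. count_space UNIV) (\<lambda>A \<omega>. card (N \<omega> \<inter> A)) \<A>)"

definition BM_PPP_indep :: "'a measure \<Rightarrow> (real \<Rightarrow> 'a \<Rightarrow> real) \<Rightarrow> ('a \<Rightarrow> (real \<times> real) set) \<Rightarrow> bool" where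
  "BM_PPP_indep M B N \<longleftrightarrow>
     (\<forall>I \<J>. finite I \<and> I \<subseteq> {0..} \<and> finite \<J> \<and> (\<forall>A\<in>\<J>. ppp_test_set A) \<longrightarrow>
        prob_space.indep_set M
          {(\<lambda>\<omega>. \<lambda>t\<in>I. B t \<omega>) -` S \<inter> space M | S. S \<in> sets (Pi\<^sub>M I (\<lambda>_. borel))}
          {(\<lambda>\<omega>. \<lambda>A\<in>\<J>. card (N \<omega> \<inter> A)) -` S \<inter> space M | S.
             S \<in> sets (Pi\<^sub>M \<J> (\<lambda>_. count_space UNIV))})"

text \<open>Pathwise ratchet construction. Given a path b (= B^mu), a point configuration P and s0,
  rat_data b P s0 n = (tau_n, S^(n)_{tau_n}); tau_n = infinity if the n-th event never happens.\<close>
primrec rat_data :: "(real \<Rightarrow> real) \<Rightarrow> (real \<times> real) set \<Rightarrow> real \<Rightarrow> nat \<Rightarrow> ereal \<times> real" where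
  "rat_data b P s0 0 = (0, s0)"
| "rat_data b P s0 (Suc n) =
     (case rat_data b P s0 n of (\<tau>, y) \<Rightarrow>
       if \<tau> = \<infinity> then (\<infinity>, y) else
       (let Sprev = (\<lambda>t. max y (Sup (b ` {real_of_ereal \<tau>..t})));
            hits = {t. ereal t > \<tau> \<and> (\<exists>z. (z, t) \<in> P \<and> b t \<le> z \<and> z \<le> Sprev t)};
            \<tau>' = Inf (ereal ` hits)
        in if \<tau>' = \<infinity> then (\<infinity>, y)
           else (\<tau>', SOME z. (z, real_of_ereal \<tau>') \<in> P \<and> b (real_of_ereal \<tau>') \<le> z
                              \<and> z \<le> Sprev (real_of_ereal \<tau>'))))"

text \<open>S_t = S^(n)_t for t in [tau_n, tau_{n+1}).\<close>
definition ratchet_S :: "(real \<Rightarrow> real) \<Rightarrow> (real \<times> real) set \<Rightarrow> real \<Rightarrow> real \<Rightarrow> real" where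
  "ratchet_S b P s0 t =
     (let n = (GREATEST n. fst (rat_data b P s0 n) \<le> ereal t);
          \<tau> = fst (rat_data b P s0 n); y = snd (rat_data b P s0 n)
      in max y (Sup (b ` {real_of_ereal \<tau>..t})))"

definition coupl_time :: "(real \<Rightarrow> real) \<Rightarrow> (real \<Rightarrow> real) \<Rightarrow> ereal" where
  "coupl_time S S' = Inf (ereal ` {t. 0 \<le> t \<and> S t = S' t})"

definition exp_time :: "real \<Rightarrow> ereal \<Rightarrow> ennreal" where
  "exp_time \<alpha> T = (if T = \<infinity> then (if \<alpha> = 0 then 1 else \<top>) else ennreal (exp (\<alpha> * real_of_ereal T)))"

end

theory Submission
  imports Defs
begin


definition locfin :: "(real \<times> real) set \<Rightarrow> bool" where
  "locfin P \<longleftrightarrow> (\<forall>R::real. finite {p \<in> P. \<bar>fst p\<bar> \<le> R \<and> snd p \<le> R})"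

lemma bounded_path:
  fixes b :: "real \<Rightarrow> real" and T :: real
  assumes "continuous_on {0..} b" "0 \<le> T"
  obtains R where "R \<ge> 0" "\<And>s. 0 \<le> s \<Longrightarrow> s \<le> T \<Longrightarrow> \<bar>b s\<bar> \<le> R"
proof -
  have "compact (b ` {0..T})"
    proof (rule compact_continuous_image)
    show "continuous_on {0..T} b" by (rule continuous_on_subset[OF assms(1)]) auto
  qed (rule compact_Icc)
  then obtain R where R: "\<And>y. y \<in> b ` {0..T} \<Longrightarrow> norm y \<le> R"
    using compact_imp_bounded bounded_iff by metis
  show ?thesis
    by (rule that[of "max R 0"]) (use R in force)+
qed

lemma attain:
  fixes b :: "real \<Rightarrow> real"
  assumes cont: "continuous_on {0..} b" and lf: "locfin P" and r: "0 \<le> r"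
    and H: "H = {t. ereal t > ereal r \<and> (\<exists>z. (z, t) \<in> P \<and> b t \<le> z \<and> z \<le> max y (Sup (b ` {r..t})))}"
    and ne: "H \<noteq> {}"
  shows "\<exists>t\<in>H. Inf (ereal ` H) = ereal t"
proof -
  obtain t0 where t0: "t0 \<in> H" using ne by auto
  have "r < t0" using t0 H by auto
  obtain R0 where R0: "R0 \<ge> 0" "\<And>s. 0 \<le> s \<Longrightarrow> s \<le> t0 \<Longrightarrow> \<bar>b s\<bar> \<le> R0"
    using bounded_path[OF cont, of t0] \<open>r < t0\<close> r by auto
  define R where "R = max (max \<bar>y\<bar> R0) t0"
  let ?Box = "{p \<in> P. \<bar>fst p\<bar> \<le> R \<and> snd p \<le> R}"
  have sub: "H \<inter> {..t0} \<subseteq> snd ` ?Box"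
  proof
    fix t assume t: "t \<in> H \<inter> {..t0}"
    then obtain z where z: "(z, t) \<in> P" "b t \<le> z" "z \<le> max y (Sup (b ` {r..t}))" and rt: "r < t" "t \<le> t0"
      using H by auto
    have bt: "\<bar>b t\<bar> \<le> R0" using R0 rt r by auto
    have "Sup (b ` {r..t}) \<le> R0"
      by (rule cSup_least) (use rt r R0 in \<open>auto simp: abs_le_iff\<close>)
    then have "\<bar>z\<bar> \<le> R" using z bt unfolding R_def by (auto simp: abs_le_iff)
    moreover have "t \<le> R" using rt unfolding R_def by auto
    ultimately show "t \<in> snd ` ?Box" using z(1) by (auto intro!: image_eqI[of _ _ "(z,t)"])
  qed
  have fin: "finite (H \<inter> {..t0})"
    using finite_subset[OF sub] lf unfolding locfin_def by auto
  have ne2: "H \<inter> {..t0} \<noteq> {}" using t0 by auto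
  define m where "m = Min (H \<inter> {..t0})"
  have mH: "m \<in> H" and mt0: "m \<le> t0" using Min_in[OF fin ne2] unfolding m_def by auto
  have mle: "m \<le> t" if "t \<in> H" for t
  proof (cases "t \<le> t0")
    case True then show ?thesis using Min_le[OF fin] that unfolding m_def by auto
  next
    case False then show ?thesis using mt0 by auto
  qed
  have "Inf (ereal ` H) = ereal m"
    by (rule antisym) (auto intro!: Inf_lower Inf_greatest mH mle)
  then show ?thesis using mH by auto
qed

lemma rat_inf:
  assumes "rat_data b P s0 n = (\<infinity>, y)"
  shows "rat_data b P s0 (Suc n) = (\<infinity>, y)"
  using assms by simp

lemma rat_step:
  fixes b :: "real \<Rightarrow> real"
  assumes cont: "continuous_on {0..} b" and lf: "locfin P" and r: "0 \<le> r"
    and D: "rat_data b P s0 n = (ereal r, y)"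
  shows "rat_data b P s0 (Suc n) = (\<infinity>, y) \<or>
     (\<exists>r' z. rat_data b P s0 (Suc n) = (ereal r', z) \<and> r < r' \<and> (z, r') \<in> P \<and> b r' \<le> z
        \<and> z \<le> max y (Sup (b ` {r..r'})))"
proof -
  define H where "H = {t. ereal t > ereal r \<and> (\<exists>z. (z, t) \<in> P \<and> b t \<le> z \<and> z \<le> max y (Sup (b ` {r..t})))}"
  have eq: "rat_data b P s0 (Suc n) = (if Inf (ereal ` H) = \<infinity> then (\<infinity>, y)
      else (Inf (ereal ` H), SOME z. (z, real_of_ereal (Inf (ereal ` H))) \<in> P \<and> b (real_of_ereal (Inf (ereal ` H))) \<le> z
                              \<and> z \<le> max y (Sup (b ` {r..real_of_ereal (Inf (ereal ` H))}))))"
    using D unfolding H_def by (simp add: Let_def)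
  show ?thesis
  proof (cases "Inf (ereal ` H) = \<infinity>")
    case True then show ?thesis using eq by simp
  next
    case False
    then have "H \<noteq> {}" by (auto simp: top_ereal_def)
    from attain[OF cont lf r H_def this] obtain t where t: "t \<in> H" "Inf (ereal ` H) = ereal t" by blast
    have ex: "\<exists>z. (z, t) \<in> P \<and> b t \<le> z \<and> z \<le> max y (Sup (b ` {r..t}))" using t(1) H_def by auto
    let ?z = "SOME z. (z, t) \<in> P \<and> b t \<le> z \<and> z \<le> max y (Sup (b ` {r..t}))"
    have zz: "(?z, t) \<in> P \<and> b t \<le> ?z \<and> ?z \<le> max y (Sup (b ` {r..t}))"
      by (rule someI_ex[OF ex])
    have "rat_data b P s0 (Suc n) = (ereal t, ?z)" using eq t(2) by simp
    moreover have "r < t" using t(1) H_def by auto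
    ultimately show ?thesis using zz by blast
  qed
qed



lemma rat_nonneg:
  fixes b :: "real \<Rightarrow> real"
  assumes cont: "continuous_on {0..} b" and lf: "locfin P"
  shows "fst (rat_data b P s0 n) = \<infinity> \<or> (\<exists>r\<ge>0. fst (rat_data b P s0 n) = ereal r)"
proof (induction n)
  case 0 then show ?case by auto
next
  case (Suc n)
  obtain \<tau> y where D: "rat_data b P s0 n = (\<tau>, y)" by fastforce
  show ?case
  proof (cases "\<tau> = \<infinity>")
    case True then show ?thesis using D by simp
  next
    case False
    then obtain r where r: "r \<ge> 0" "\<tau> = ereal r" using Suc D by auto
    from rat_step[OF cont lf r(1), of s0 n y] D r show ?thesis by auto
  qed
qed

lemma rat_mono:
  fixes b :: "real \<Rightarrow> real"
  assumes cont: "continuous_on {0..} b" and lf: "locfin P"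
  shows "fst (rat_data b P s0 n) \<le> fst (rat_data b P s0 (Suc n))"
proof -
  obtain \<tau> y where D: "rat_data b P s0 n = (\<tau>, y)" by fastforce
  show ?thesis
  proof (cases "\<tau> = \<infinity>")
    case True then show ?thesis using D by simp
  next
    case False
    then obtain r where r: "r \<ge> 0" "\<tau> = ereal r" using rat_nonneg[OF cont lf, of s0 n] D by auto
    from rat_step[OF cont lf r(1), of s0 n y] D r show ?thesis by auto
  qed
qed

lemma rat_strict:
  fixes b :: "real \<Rightarrow> real"
  assumes cont: "continuous_on {0..} b" and lf: "locfin P"
  shows "n < m \<Longrightarrow> fst (rat_data b P s0 m) \<noteq> \<infinity> \<Longrightarrow> fst (rat_data b P s0 n) < fst (rat_data b P s0 m)"
proof (induction m)
  case 0 then show ?case by simp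
next
  case (Suc m)
  obtain \<tau> y where D: "rat_data b P s0 m = (\<tau>, y)" by fastforce
  have "\<tau> \<noteq> \<infinity>" using Suc.prems D by (auto simp: Let_def)
  then obtain r where r: "r \<ge> 0" "\<tau> = ereal r" using rat_nonneg[OF cont lf, of s0 m] D by auto
  have lt: "fst (rat_data b P s0 m) < fst (rat_data b P s0 (Suc m))"
    using rat_step[OF cont lf r(1), of s0 m y] D r Suc.prems by auto
  show ?case
  proof (cases "n = m")
    case True then show ?thesis using lt by simp
  next
    case False
    then have "n < m" using Suc.prems by simp
    moreover have "fst (rat_data b P s0 m) \<noteq> \<infinity>" using D \<open>\<tau> \<noteq> \<infinity>\<close> by simp
    ultimately show ?thesis using Suc.IH lt by auto
  qed
qed

lemma ratchet_at_max:
  fixes b :: "real \<Rightarrow> real"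
  assumes cont: "continuous_on {0..} b" and lf: "locfin P"
    and Ts: "0 \<le> Ts" and s0: "0 \<le> s0" "s0 \<le> b Ts" and mx: "\<And>r. 0 \<le> r \<Longrightarrow> r \<le> Ts \<Longrightarrow> b r \<le> b Ts"
  shows "ratchet_S b P s0 Ts = b Ts"
proof -
  let ?D = "rat_data b P s0"
  have supb: "Sup (b ` {r..r'}) \<le> b Ts" if "0 \<le> r" "r \<le> r'" "r' \<le> Ts" for r r'
    by (rule cSup_least) (use that mx in auto)
  have inv: "fst (?D n) \<le> ereal Ts \<Longrightarrow> snd (?D n) \<le> b Ts" for n
  proof (induction n)
    case 0 then show ?case using s0 by simp
  next
    case (Suc n)
    obtain \<tau> y where D: "?D n = (\<tau>, y)" by fastforce
    have "\<tau> \<noteq> \<infinity>" using Suc.prems D by (auto simp: Let_def)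
    then obtain r where r: "r \<ge> 0" "\<tau> = ereal r" using rat_nonneg[OF cont lf, of s0 n] D by auto
    from rat_step[OF cont lf r(1), of s0 n y] D r Suc.prems
    obtain r' z where rz: "?D (Suc n) = (ereal r', z)" "r < r'" "z \<le> max y (Sup (b ` {r..r'}))"
      by auto
    have "r' \<le> Ts" using rz(1) Suc.prems by simp
    then have "y \<le> b Ts" using Suc.IH D r rz(2) by simp
    moreover have "Sup (b ` {r..r'}) \<le> b Ts" using supb r rz \<open>r' \<le> Ts\<close> by simp
    ultimately show ?case using rz by simp
  qed
  obtain R0 where R0: "R0 \<ge> 0" "\<And>s. 0 \<le> s \<Longrightarrow> s \<le> Ts \<Longrightarrow> \<bar>b s\<bar> \<le> R0"
    using bounded_path[OF cont Ts] by auto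
  define R where "R = max R0 Ts"
  let ?Box = "{p \<in> P. \<bar>fst p\<bar> \<le> R \<and> snd p \<le> R}"
  define S where "S = {n. fst (?D n) \<le> ereal Ts}"
  have img: "fst ` ?D ` S \<subseteq> insert 0 (ereal ` snd ` ?Box)"
  proof
    fix e assume "e \<in> fst ` ?D ` S"
    then obtain n where n: "n \<in> S" "e = fst (?D n)" by auto
    show "e \<in> insert 0 (ereal ` snd ` ?Box)"
    proof (cases n)
      case 0 then show ?thesis using n by simp
    next
      case (Suc k)
      obtain \<tau> y where D: "?D k = (\<tau>, y)" by fastforce
      have "\<tau> \<noteq> \<infinity>" using n Suc D unfolding S_def by (auto simp: Let_def)
      then obtain r where r: "r \<ge> 0" "\<tau> = ereal r" using rat_nonneg[OF cont lf, of s0 k] D by auto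
      from rat_step[OF cont lf r(1), of s0 k y] D r n Suc
      obtain r' z where rz: "?D (Suc k) = (ereal r', z)" "r < r'" "(z, r') \<in> P" "b r' \<le> z"
          "z \<le> max y (Sup (b ` {r..r'}))"
        unfolding S_def by auto
      have "r' \<le> Ts" using rz(1) n Suc unfolding S_def by simp
      then have "y \<le> b Ts" using inv[of k] D r rz(2) by simp
      moreover have "Sup (b ` {r..r'}) \<le> b Ts" using supb r rz \<open>r' \<le> Ts\<close> by simp
      ultimately have "z \<le> b Ts" using rz by simp
      moreover have "\<bar>b r'\<bar> \<le> R0" "\<bar>b Ts\<bar> \<le> R0" using R0 r rz(2) \<open>r' \<le> Ts\<close> Ts by auto
      ultimately have "\<bar>z\<bar> \<le> R" using rz(4) unfolding R_def by (auto simp: abs_le_iff)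
      moreover have "r' \<le> R" using \<open>r' \<le> Ts\<close> unfolding R_def by simp
      ultimately show ?thesis using n Suc rz(1,3)
        by (auto intro!: image_eqI[of _ _ "(z, r')"])
    qed
  qed
  have fin_box: "finite ?Box" using lf unfolding locfin_def by auto
  have inj: "inj_on (\<lambda>n. fst (?D n)) S"
  proof (rule inj_onI)
    fix n m assume nm: "n \<in> S" "m \<in> S" "fst (?D n) = fst (?D m)"
    have fin: "fst (?D k) \<noteq> \<infinity>" if "k \<in> S" for k using that unfolding S_def by auto
    show "n = m"
    proof (rule ccontr)
      assume "n \<noteq> m"
      then have "n < m \<or> m < n" by auto
      then show False
        using rat_strict[OF cont lf, of n m s0] rat_strict[OF cont lf, of m n s0] fin nm by auto
    qed
  qed
  have "finite ((\<lambda>n. fst (?D n)) ` S)"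
    using finite_subset[OF _ finite_insert[THEN iffD2, OF finite_imageI[OF finite_imageI[OF fin_box]]]] img
    by (simp add: image_image)
  then have finS: "finite S" using finite_imageD inj by blast
  have S0: "0 \<in> S" unfolding S_def using Ts by simp
  define m where "m = (GREATEST n. fst (?D n) \<le> ereal Ts)"
  have mS: "m \<in> S" and mmax: "\<And>k. k \<in> S \<Longrightarrow> k \<le> m"
  proof -
    have bnd: "\<forall>y. y \<in> S \<longrightarrow> y \<le> Max S" using finS by auto
    show "m \<in> S" unfolding m_def using GreatestI_nat[of "\<lambda>n. n \<in> S" 0 "Max S"] S0 bnd
      unfolding S_def by auto
    show "k \<le> m" if "k \<in> S" for k unfolding m_def using Greatest_le_nat[of "\<lambda>n. n \<in> S" k "Max S"] that bnd
      unfolding S_def by auto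
  qed
  obtain \<tau> y where Dm: "?D m = (\<tau>, y)" by fastforce
  have "\<tau> \<noteq> \<infinity>" using mS Dm unfolding S_def by auto
  then obtain r where r: "r \<ge> 0" "\<tau> = ereal r" using rat_nonneg[OF cont lf, of s0 m] Dm by auto
  have rTs: "r \<le> Ts" using mS Dm r unfolding S_def by simp
  have ym: "y \<le> b Ts" using inv[of m] mS Dm unfolding S_def by simp
  have sup: "Sup (b ` {r..Ts}) = b Ts"
    by (rule cSup_eq_maximum) (use rTs r mx in auto)
  show ?thesis
    unfolding ratchet_S_def Let_def m_def[symmetric] using Dm r ym sup by simp
qed

lemma coupl_le:
  fixes b :: "real \<Rightarrow> real"
  assumes cont: "continuous_on {0..} b" and lf: "locfin P"
    and Ts: "0 \<le> Ts" and s0: "0 \<le> x'" "x' \<le> x" "x \<le> b Ts" and mx: "\<And>r. 0 \<le> r \<Longrightarrow> r \<le> Ts \<Longrightarrow> b r \<le> b Ts"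
  shows "coupl_time (ratchet_S b P x) (ratchet_S b P x') \<le> ereal Ts"
proof -
  have "ratchet_S b P x Ts = ratchet_S b P x' Ts"
    using ratchet_at_max[OF cont lf Ts _ _ mx, of x] ratchet_at_max[OF cont lf Ts _ _ mx, of x'] s0 by simp
  then show ?thesis unfolding coupl_time_def using Ts by (auto intro: Inf_lower)
qed

lemma coupl_nonneg: "coupl_time S S' \<ge> 0"
  unfolding coupl_time_def by (auto intro!: Inf_greatest)



lemma indep_incr:
  assumes bm: "std_BM M B" and h: "h > 0"
  shows "prob_space.indep_vars M (\<lambda>_. borel) (\<lambda>i \<omega>. B (real (Suc i) * h) \<omega> - B (real i * h) \<omega>) {..<K}"
proof -
  define ts where "ts = map (\<lambda>j. real j * h) [0..<Suc K]"
  have sorted: "sorted_wrt (<) ts"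
    unfolding ts_def sorted_wrt_map using h
    by (auto simp: sorted_wrt_iff_nth_less nth_upt simp del: upt_Suc)
  have nn: "\<forall>t\<in>set ts. 0 \<le> t" unfolding ts_def using h by auto
  have "prob_space.indep_vars M (\<lambda>_. borel) (\<lambda>i \<omega>. B (ts ! Suc i) \<omega> - B (ts ! i) \<omega>) {..<length ts - 1}"
    using bm sorted nn unfolding std_BM_def by blast
  moreover have "length ts - 1 = K" unfolding ts_def by simp
  moreover have "ts ! i = real i * h" if "i \<le> K" for i
    unfolding ts_def using that by (simp del: upt_Suc add: nth_map)
  ultimately show ?thesis
    using bm unfolding std_BM_def
    by (subst prob_space.indep_vars_cong[where Y="\<lambda>i \<omega>. B (ts ! Suc i) \<omega> - B (ts ! i) \<omega>" and J="{..<K}" and M'="\<lambda>_. borel"]) auto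
qed

lemma (in prob_space) indep_nn_mult:
  fixes f g :: "'a \<Rightarrow> ennreal"
  assumes "indep_var borel f borel g"
  shows "(\<integral>\<^sup>+\<omega>. f \<omega> * g \<omega> \<partial>M) = (\<integral>\<^sup>+\<omega>. f \<omega> \<partial>M) * (\<integral>\<^sup>+\<omega>. g \<omega> \<partial>M)"
proof -
  have cb: "case_bool (borel :: ennreal measure) borel = (\<lambda>_. borel)" by (rule ext) (simp split: bool.split)
  have iv: "indep_vars (\<lambda>_. borel) (case_bool f g) UNIV"
    using assms unfolding indep_var_def cb .
  have "(\<integral>\<^sup>+\<omega>. (\<Prod>i\<in>UNIV. case_bool f g i \<omega>) \<partial>M) = (\<Prod>i\<in>UNIV. \<integral>\<^sup>+\<omega>. case_bool f g i \<omega> \<partial>M)"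
    by (rule indep_vars_nn_integral[OF _ iv]) auto
  then show ?thesis by (simp add: UNIV_bool mult.commute)
qed

lemma PiM_component_measurable:
  "(\<lambda>v. v i) \<in> borel_measurable (PiM I (\<lambda>_. (borel :: real measure)))"
proof (cases "i \<in> I")
  case True then show ?thesis by simp
next
  case False
  have "(\<lambda>v. undefined :: real) \<in> borel_measurable (PiM I (\<lambda>_. (borel :: real measure)))" by simp
  then show ?thesis
    by (rule measurable_cong[THEN iffD1, rotated]) (use False in \<open>auto simp: space_PiM PiE_def extensional_def\<close>)
qed

lemma normal_mgf:
  fixes \<sigma> c :: real assumes "\<sigma> > 0"
  shows "(\<integral>\<^sup>+v. ennreal (normal_density 0 \<sigma> v) * ennreal (exp (c * v)) \<partial>lborel) = ennreal (exp (c\<^sup>2 * \<sigma>\<^sup>2 / 2))"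
proof -
  have eq: "normal_density 0 \<sigma> v * exp (c * v) = exp (c\<^sup>2 * \<sigma>\<^sup>2 / 2) * normal_density (c * \<sigma>\<^sup>2) \<sigma> v" for v
  proof -
    have "- ((v - 0)\<^sup>2 / (2 * \<sigma>\<^sup>2)) + c * v = c\<^sup>2 * \<sigma>\<^sup>2 / 2 + - ((v - c * \<sigma>\<^sup>2)\<^sup>2 / (2 * \<sigma>\<^sup>2))"
      using assms by (simp add: field_simps power2_eq_square)
    then show ?thesis
      unfolding normal_density_def by (simp add: exp_add[symmetric] mult.commute mult.left_commute)
  qed
  have "(\<integral>\<^sup>+v. ennreal (normal_density 0 \<sigma> v) * ennreal (exp (c * v)) \<partial>lborel)
      = (\<integral>\<^sup>+v. ennreal (exp (c\<^sup>2 * \<sigma>\<^sup>2 / 2)) * ennreal (normal_density (c * \<sigma>\<^sup>2) \<sigma> v) \<partial>lborel)"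
    by (intro nn_integral_cong) (simp add: ennreal_mult'[symmetric] eq)
  also have "\<dots> = ennreal (exp (c\<^sup>2 * \<sigma>\<^sup>2 / 2)) * (\<integral>\<^sup>+v. ennreal (normal_density (c * \<sigma>\<^sup>2) \<sigma> v) \<partial>lborel)"
    by (rule nn_integral_cmult) simp
  also have "(\<integral>\<^sup>+v. ennreal (normal_density (c * \<sigma>\<^sup>2) \<sigma> v) \<partial>lborel) = 1"
  proof -
    interpret prob_space "density lborel (normal_density (c * \<sigma>\<^sup>2) \<sigma>)"
      using prob_space_normal_density[OF assms] .
    show ?thesis using emeasure_space_1 by (simp add: emeasure_density)
  qed
  finally show ?thesis by simp
qed


lemma ost:
  fixes \<alpha> lam \<mu> h x :: real and K :: nat
  assumes bm: "std_BM M B" and h: "h > 0" and eqn: "\<alpha> - lam * \<mu> + lam\<^sup>2 / 2 = 0"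
  defines "\<tau> \<equiv> \<lambda>\<omega>. LEAST k. k = K \<or> x \<le> B (real k * h) \<omega> + \<mu> * (real k * h)"
  shows "(\<integral>\<^sup>+\<omega>. ennreal (exp (\<alpha> * (real (\<tau> \<omega>) * h) - lam * (B (real (\<tau> \<omega>) * h) \<omega> + \<mu> * (real (\<tau> \<omega>) * h)))) \<partial>M) = 1"
proof -
  interpret prob_space M using bm unfolding std_BM_def by auto
  have Bm[measurable]: "\<And>t. B t \<in> borel_measurable M" using bm unfolding std_BM_def by auto
  have B0: "\<And>\<omega>. \<omega> \<in> space M \<Longrightarrow> B 0 \<omega> = 0" using bm unfolding std_BM_def by auto
  define X where "X i \<omega> = B (real (Suc i) * h) \<omega> - B (real i * h) \<omega>" for i \<omega>
  define bb where "bb \<omega> j = B (real j * h) \<omega> + \<mu> * (real j * h)" for \<omega> j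
  define Z where "Z \<omega> j = exp (\<alpha> * (real j * h) - lam * bb \<omega> j)" for \<omega> j
  define Y where "Y k \<omega> = Z \<omega> (min k (\<tau> \<omega>))" for k \<omega>
  have tau_m[measurable]: "\<tau> \<in> measurable M (count_space UNIV)"
    unfolding \<tau>_def by measurable
  have Y_m[measurable]: "(\<lambda>\<omega>. Y k \<omega>) \<in> borel_measurable M" for k
  proof -
    have "(\<lambda>\<omega>. (\<lambda>j \<omega>. Z \<omega> (min k j)) (\<tau> \<omega>) \<omega>) \<in> borel_measurable M"
      by (rule measurable_compose_countable[OF _ tau_m]) (simp add: Z_def bb_def)
    then show ?thesis unfolding Y_def by simp
  qed
  have tauK: "\<tau> \<omega> \<le> K" for \<omega> unfolding \<tau>_def by (rule Least_le) simp
  have tauI: "\<tau> \<omega> = K \<or> x \<le> bb \<omega> (\<tau> \<omega>)" for \<omega>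
    unfolding \<tau>_def bb_def by (rule LeastI[of _ K]) simp
  have tau_le: "x \<le> bb \<omega> j \<Longrightarrow> \<tau> \<omega> \<le> j" for \<omega> j
    unfolding \<tau>_def bb_def by (rule Least_le) simp
  have step: "(\<integral>\<^sup>+\<omega>. ennreal (Y (Suc k) \<omega>) \<partial>M) = (\<integral>\<^sup>+\<omega>. ennreal (Y k \<omega>) \<partial>M)" if kK: "k < K" for k
  proof -
    define c where "c = exp (\<alpha> * h - lam * \<mu> * h)"
    define H where "H \<omega> = (if (\<forall>j\<le>k. bb \<omega> j < x) then Z \<omega> k else 0)" for \<omega>
    define G where "G \<omega> = (if (\<forall>j\<le>k. bb \<omega> j < x) then 0 else Y k \<omega>)" for \<omega>
    have H_m[measurable]: "H \<in> borel_measurable M" unfolding H_def Z_def bb_def by measurable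
    have G_m[measurable]: "G \<in> borel_measurable M" unfolding G_def bb_def by measurable
    have H_nn: "0 \<le> H \<omega>" for \<omega> unfolding H_def Z_def by simp
    have G_nn: "0 \<le> G \<omega>" for \<omega> unfolding G_def Y_def Z_def by simp
    have dec: "Y k \<omega> = G \<omega> + H \<omega> \<and> Y (Suc k) \<omega> = G \<omega> + H \<omega> * (c * exp (- lam * X k \<omega>))" for \<omega>
    proof (cases "\<forall>j\<le>k. bb \<omega> j < x")
      case True
      have "k < \<tau> \<omega>"
      proof (rule ccontr)
        assume "\<not> k < \<tau> \<omega>"
        then have "\<tau> \<omega> \<le> k" by simp
        then show False using tauI[of \<omega>] True kK by force
      qed
      then have m1: "min k (\<tau> \<omega>) = k" "min (Suc k) (\<tau> \<omega>) = Suc k" by auto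
      have "Z \<omega> (Suc k) = Z \<omega> k * (c * exp (- lam * X k \<omega>))"
        unfolding Z_def c_def X_def bb_def
        by (simp add: exp_add[symmetric] algebra_simps)
      then show ?thesis unfolding Y_def G_def H_def using True m1 by simp
    next
      case False
      then obtain j where j: "j \<le> k" "x \<le> bb \<omega> j" by (auto simp: not_less)
      then have "\<tau> \<omega> \<le> k" using tau_le[of \<omega> j] by simp
      then have "min k (\<tau> \<omega>) = min (Suc k) (\<tau> \<omega>)" by simp
      moreover have nf: "(\<forall>j\<le>k. bb \<omega> j < x) = False" using j by force
      ultimately show ?thesis unfolding Y_def G_def H_def nf if_False by simp
    qed
    define \<phi> where "\<phi> v = (if (\<forall>j\<le>k. (\<Sum>i<j. v i) + \<mu> * (real j * h) < x)
        then exp (\<alpha> * (real k * h) - lam * ((\<Sum>i<k. v i) + \<mu> * (real k * h))) else 0)" for v :: "nat \<Rightarrow> real"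
    have \<phi>_m: "(\<lambda>v. ennreal (\<phi> v)) \<in> borel_measurable (PiM {..<k} (\<lambda>_. borel))"
    proof -
      have sm[measurable]: "(\<lambda>v. \<Sum>i<j. v i) \<in> borel_measurable (PiM {..<k} (\<lambda>_. (borel :: real measure)))" for j
        by (intro borel_measurable_sum) (rule PiM_component_measurable)
      show ?thesis unfolding \<phi>_def by measurable
    qed
    have g_m: "(\<lambda>v. ennreal (c * exp (- lam * v k))) \<in> borel_measurable (PiM {k} (\<lambda>_. borel))"
    proof -
      note PiM_component_measurable[of k "{k}", measurable]
      show ?thesis by measurable
    qed
    have tele: "B (real j * h) \<omega> = (\<Sum>i<j. X i \<omega>)" if "\<omega> \<in> space M" for j \<omega>
      unfolding X_def using sum_lessThan_telescope[of "\<lambda>i. B (real i * h) \<omega>" j] B0[OF that] by simp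
    have Hphi: "H \<omega> = \<phi> (restrict (\<lambda>i. X i \<omega>) {..<k})" if "\<omega> \<in> space M" for \<omega>
    proof -
      have s: "(\<Sum>i<j. restrict (\<lambda>i. X i \<omega>) {..<k} i) = B (real j * h) \<omega>" if "j \<le> k" for j
        unfolding tele[OF \<open>\<omega> \<in> space M\<close>, of j] using that by (intro sum.cong) auto
      show ?thesis unfolding H_def \<phi>_def Z_def bb_def using s by (simp cong: conj_cong)
    qed
    have iv: "indep_var borel ((\<lambda>v. ennreal (\<phi> v)) \<circ> (\<lambda>\<omega>. restrict (\<lambda>i. X i \<omega>) {..<k}))
                   borel ((\<lambda>v. ennreal (c * exp (- lam * v k))) \<circ> (\<lambda>\<omega>. restrict (\<lambda>i. X i \<omega>) {k}))"
      by (rule indep_var_compose[OF indep_var_restrict[OF indep_incr[OF bm h, of K, folded X_def]] \<phi>_m g_m])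
         (use kK in auto)
    have prod: "(\<integral>\<^sup>+\<omega>. ennreal (H \<omega>) * ennreal (c * exp (- lam * X k \<omega>)) \<partial>M)
        = (\<integral>\<^sup>+\<omega>. ennreal (H \<omega>) \<partial>M) * (\<integral>\<^sup>+\<omega>. ennreal (c * exp (- lam * X k \<omega>)) \<partial>M)"
    proof -
      have "(\<integral>\<^sup>+\<omega>. ennreal (H \<omega>) * ennreal (c * exp (- lam * X k \<omega>)) \<partial>M)
          = (\<integral>\<^sup>+\<omega>. ((\<lambda>v. ennreal (\<phi> v)) \<circ> (\<lambda>\<omega>. restrict (\<lambda>i. X i \<omega>) {..<k})) \<omega> *
                    ((\<lambda>v. ennreal (c * exp (- lam * v k))) \<circ> (\<lambda>\<omega>. restrict (\<lambda>i. X i \<omega>) {k})) \<omega> \<partial>M)"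
        by (rule nn_integral_cong) (simp add: Hphi)
      also have "\<dots> = (\<integral>\<^sup>+\<omega>. ((\<lambda>v. ennreal (\<phi> v)) \<circ> (\<lambda>\<omega>. restrict (\<lambda>i. X i \<omega>) {..<k})) \<omega> \<partial>M) *
                    (\<integral>\<^sup>+\<omega>. ((\<lambda>v. ennreal (c * exp (- lam * v k))) \<circ> (\<lambda>\<omega>. restrict (\<lambda>i. X i \<omega>) {k})) \<omega> \<partial>M)"
        by (rule indep_nn_mult[OF iv])
      also have "\<dots> = (\<integral>\<^sup>+\<omega>. ennreal (H \<omega>) \<partial>M) * (\<integral>\<^sup>+\<omega>. ennreal (c * exp (- lam * X k \<omega>)) \<partial>M)"
        by (intro arg_cong2[where f="(*)"] nn_integral_cong) (simp_all add: Hphi)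
      finally show ?thesis .
    qed
    have one: "(\<integral>\<^sup>+\<omega>. ennreal (c * exp (- lam * X k \<omega>)) \<partial>M) = 1"
    proof -
      have hh: "real (Suc k) * h - real k * h = h" by (simp add: algebra_simps)
      have "0 \<le> real k * h" "real k * h < real (Suc k) * h" using h by auto
      moreover have "\<forall>s t. 0 \<le> s \<and> s < t \<longrightarrow> distributed M lborel (\<lambda>\<omega>. B t \<omega> - B s \<omega>)
          (\<lambda>v. ennreal (normal_density 0 (sqrt (t - s)) v))" using bm unfolding std_BM_def by blast
      ultimately have "distributed M lborel (\<lambda>\<omega>. B (real (Suc k) * h) \<omega> - B (real k * h) \<omega>)
          (\<lambda>v. ennreal (normal_density 0 (sqrt (real (Suc k) * h - real k * h)) v))" by blast
      then have dist: "distributed M lborel (X k) (\<lambda>v. ennreal (normal_density 0 (sqrt h) v))"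
        unfolding hh X_def[abs_def] by simp
      have "(\<integral>\<^sup>+\<omega>. ennreal (c * exp (- lam * X k \<omega>)) \<partial>M)
          = (\<integral>\<^sup>+v. ennreal (normal_density 0 (sqrt h) v) * ennreal (c * exp (- lam * v)) \<partial>lborel)"
        by (rule distributed_nn_integral[OF dist, symmetric]) measurable
      also have "\<dots> = (\<integral>\<^sup>+v. ennreal c * (ennreal (normal_density 0 (sqrt h) v) * ennreal (exp ((- lam) * v))) \<partial>lborel)"
        by (intro nn_integral_cong) (simp add: c_def ennreal_mult' mult_ac)
      also have "\<dots> = ennreal c * (\<integral>\<^sup>+v. ennreal (normal_density 0 (sqrt h) v) * ennreal (exp ((- lam) * v)) \<partial>lborel)"
        by (rule nn_integral_cmult) simp
      also have "\<dots> = ennreal c * ennreal (exp ((- lam)\<^sup>2 * (sqrt h)\<^sup>2 / 2))"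
        using normal_mgf[of "sqrt h" "- lam"] h by simp
      also have "\<dots> = ennreal (exp (h * (\<alpha> - lam * \<mu> + lam\<^sup>2 / 2)))"
        unfolding c_def using h by (simp add: ennreal_mult'[symmetric] exp_add[symmetric] algebra_simps)
      also have "\<dots> = 1" using eqn by simp
      finally show ?thesis .
    qed
    have "(\<integral>\<^sup>+\<omega>. ennreal (Y (Suc k) \<omega>) \<partial>M)
        = (\<integral>\<^sup>+\<omega>. ennreal (G \<omega>) + ennreal (H \<omega>) * ennreal (c * exp (- lam * X k \<omega>)) \<partial>M)"
    proof (rule nn_integral_cong)
      fix \<omega>
      have e0: "0 \<le> c * exp (- lam * X k \<omega>)" unfolding c_def by simp
      have "Y (Suc k) \<omega> = G \<omega> + H \<omega> * (c * exp (- lam * X k \<omega>))" using dec by blast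
      then show "ennreal (Y (Suc k) \<omega>) = ennreal (G \<omega>) + ennreal (H \<omega>) * ennreal (c * exp (- lam * X k \<omega>))"
        by (simp only: ennreal_plus[OF G_nn mult_nonneg_nonneg[OF H_nn e0]] ennreal_mult[OF H_nn e0])
    qed
    also have "\<dots> = (\<integral>\<^sup>+\<omega>. ennreal (G \<omega>) \<partial>M) + (\<integral>\<^sup>+\<omega>. ennreal (H \<omega>) * ennreal (c * exp (- lam * X k \<omega>)) \<partial>M)"
      unfolding X_def by (rule nn_integral_add) measurable
    also have "\<dots> = (\<integral>\<^sup>+\<omega>. ennreal (G \<omega>) \<partial>M) + (\<integral>\<^sup>+\<omega>. ennreal (H \<omega>) \<partial>M)"
      using prod one by simp
    also have "\<dots> = (\<integral>\<^sup>+\<omega>. ennreal (G \<omega>) + ennreal (H \<omega>) \<partial>M)"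
      by (rule nn_integral_add[symmetric]) measurable
    also have "\<dots> = (\<integral>\<^sup>+\<omega>. ennreal (Y k \<omega>) \<partial>M)"
    proof (rule nn_integral_cong)
      fix \<omega>
      have "Y k \<omega> = G \<omega> + H \<omega>" using dec by blast
      then show "ennreal (G \<omega>) + ennreal (H \<omega>) = ennreal (Y k \<omega>)"
        by (simp only: ennreal_plus[OF G_nn H_nn])
    qed
    finally show ?thesis .
  qed
  have base: "(\<integral>\<^sup>+\<omega>. ennreal (Y 0 \<omega>) \<partial>M) = 1"
  proof -
    have "(\<integral>\<^sup>+\<omega>. ennreal (Y 0 \<omega>) \<partial>M) = (\<integral>\<^sup>+\<omega>. 1 \<partial>M)"
      by (intro nn_integral_cong) (simp add: Y_def Z_def bb_def B0)
    then show ?thesis using emeasure_space_1 by simp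
  qed
  have all: "k \<le> K \<Longrightarrow> (\<integral>\<^sup>+\<omega>. ennreal (Y k \<omega>) \<partial>M) = 1" for k
    by (induction k) (use base step in auto)
  have "(\<integral>\<^sup>+\<omega>. ennreal (exp (\<alpha> * (real (\<tau> \<omega>) * h) - lam * (B (real (\<tau> \<omega>) * h) \<omega> + \<mu> * (real (\<tau> \<omega>) * h)))) \<partial>M)
      = (\<integral>\<^sup>+\<omega>. ennreal (Y K \<omega>) \<partial>M)"
    by (intro nn_integral_cong) (simp add: Y_def Z_def bb_def tauK min_absorb2)
  then show ?thesis using all[of K] by simp
qed



definition tau_d :: "(real \<Rightarrow> real) \<Rightarrow> real \<Rightarrow> nat \<Rightarrow> nat \<Rightarrow> nat" where
  "tau_d b x t n = (LEAST k. k = t * Suc n \<or> x \<le> b (real k * (1 / real (Suc n))))"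

definition Fd :: "real \<Rightarrow> real \<Rightarrow> (real \<Rightarrow> real) \<Rightarrow> real \<Rightarrow> nat \<Rightarrow> nat \<Rightarrow> ennreal" where
  "Fd \<alpha> lam b x t n = ennreal (exp (\<alpha> * (real (tau_d b x t n) * (1 / real (Suc n)))
      - lam * b (real (tau_d b x t n) * (1 / real (Suc n)))))"

lemma tau_d_props:
  "tau_d b x t n \<le> t * Suc n"
  "tau_d b x t n = t * Suc n \<or> x \<le> b (real (tau_d b x t n) * (1 / real (Suc n)))"
  "j < tau_d b x t n \<Longrightarrow> b (real j * (1 / real (Suc n))) < x"
  "j < tau_d b x t n \<Longrightarrow> j \<noteq> t * Suc n"
proof -
  show "tau_d b x t n \<le> t * Suc n" unfolding tau_d_def by (rule Least_le) simp
  show "tau_d b x t n = t * Suc n \<or> x \<le> b (real (tau_d b x t n) * (1 / real (Suc n)))"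
    unfolding tau_d_def by (rule LeastI[of _ "t * Suc n"]) simp
  assume "j < tau_d b x t n"
  then have "\<not> (j = t * Suc n \<or> x \<le> b (real j * (1 / real (Suc n))))"
    unfolding tau_d_def by (rule not_less_Least)
  then show "b (real j * (1 / real (Suc n))) < x" "j \<noteq> t * Suc n" by auto
qed

lemma tau_time_le: "real (tau_d b x t n) * (1 / real (Suc n)) \<le> real t"
proof -
  have "real (tau_d b x t n) \<le> real t * real (Suc n)" using tau_d_props(1)[of b x t n]
    by (metis of_nat_le_iff of_nat_mult)
  then show ?thesis by (simp add: field_simps)
qed

lemma Fd_lower:
  fixes b :: "real \<Rightarrow> real" and t :: nat
  assumes cont: "continuous_on {0..} b" and b0: "b 0 = 0" and x: "0 \<le> x"
    and a: "0 \<le> \<alpha>" and l: "0 \<le> lam" and Ts: "0 \<le> Ts" "Ts \<le> real t"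
    and hitTs: "\<And>s. 0 \<le> s \<Longrightarrow> x \<le> b s \<Longrightarrow> Ts \<le> s"
  shows "ennreal (exp (\<alpha> * Ts - lam * x)) \<le> liminf (\<lambda>n. Fd \<alpha> lam b x t n)"
proof (subst le_Liminf_iff, intro allI impI)
  fix y assume y: "y < ennreal (exp (\<alpha> * Ts - lam * x))"
  define c0 where "c0 = exp (\<alpha> * Ts - lam * x)"
  have c0: "c0 > 0" unfolding c0_def by simp
  obtain r where r: "y = ennreal r" "0 \<le> r" "r < c0"
    using y unfolding c0_def by (cases y) (auto simp: ennreal_less_iff)
  have "((\<lambda>e. c0 * exp (- lam * e)) \<longlongrightarrow> c0 * exp (- lam * 0)) (at_right 0)"
    by (intro tendsto_intros)
  then have "eventually (\<lambda>e. r < c0 * exp (- lam * e)) (at_right 0)"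
    using r(3) by (intro order_tendstoD(1)) auto
  then obtain bb where bb: "bb > 0" "\<And>e. 0 < e \<Longrightarrow> e < bb \<Longrightarrow> r < c0 * exp (- lam * e)"
    unfolding eventually_at_right_field by auto
  define e where "e = bb / 2"
  have e: "e > 0" "r < c0 * exp (- lam * e)" using bb(1) bb(2)[of e] unfolding e_def by auto
  have "uniformly_continuous_on {0..real t} b"
    by (rule compact_uniformly_continuous) (auto intro: continuous_on_subset[OF cont])
  then obtain d where d: "d > 0" "\<And>s s'. s \<in> {0..real t} \<Longrightarrow> s' \<in> {0..real t} \<Longrightarrow> dist s' s < d \<Longrightarrow> dist (b s') (b s) < e"
    unfolding uniformly_continuous_on_def using e(1) by metis
  obtain N :: nat where N: "1 / real (Suc N) < d"
    using reals_Archimedean[OF d(1)] by (metis inverse_eq_divide of_nat_Suc)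
  have "y < Fd \<alpha> lam b x t n" if n: "n \<ge> N" for n
  proof -
    define h where "h = 1 / real (Suc n)"
    have "1 / real (Suc n) \<le> 1 / real (Suc N)" using n by (simp add: frac_le)
    then have h: "0 < h" "h < d" unfolding h_def using N by auto
    define k where "k = tau_d b x t n"
    define s where "s = real k * h"
    have s0: "0 \<le> s" "s \<le> real t" unfolding s_def k_def h_def using tau_time_le[of b x t n] by auto
    have bnd: "\<alpha> * Ts - lam * x - lam * e \<le> \<alpha> * s - lam * b s"
    proof (cases "x \<le> b s")
      case True
      have "Ts \<le> s" using hitTs s0 True by auto
      have "b s < x + e"
      proof (cases k)
        case 0 then show ?thesis using b0 x e unfolding s_def by simp
      next
        case (Suc j)
        have j: "b (real j * h) < x" using tau_d_props(3)[of j b x t n] Suc unfolding k_def h_def by simp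
        have "dist s (real j * h) < d" unfolding s_def Suc using h by (simp add: dist_real_def algebra_simps)
        moreover have "real j * h \<in> {0..real t}" using s0 h unfolding s_def Suc
          by (auto simp: algebra_simps)
        ultimately have "dist (b s) (b (real j * h)) < e" using d(2) s0 by auto
        then show ?thesis using j by (simp add: dist_real_def)
      qed
      moreover have "\<alpha> * Ts \<le> \<alpha> * s" using \<open>Ts \<le> s\<close> a by (rule mult_left_mono)
      moreover have "lam * b s \<le> lam * (x + e)" using \<open>b s < x + e\<close> l by (intro mult_left_mono) auto
      ultimately show ?thesis by (simp add: algebra_simps)
    next
      case False
      then have "k = t * Suc n" using tau_d_props(2)[of b x t n] unfolding k_def s_def h_def by auto
      then have "s = real t" unfolding s_def h_def by (simp add: field_simps)
      moreover have "\<alpha> * Ts \<le> \<alpha> * s" using \<open>s = real t\<close> Ts a by (intro mult_left_mono) auto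
      moreover have "lam * b s \<le> lam * x" using False l by (intro mult_left_mono) auto
      moreover have "0 \<le> lam * e" using l e by simp
      ultimately show ?thesis by (simp add: algebra_simps)
    qed
    have "r < c0 * exp (- lam * e)" by (rule e(2))
    also have "c0 * exp (- lam * e) = exp (\<alpha> * Ts - lam * x - lam * e)"
      unfolding c0_def by (simp add: exp_diff exp_minus exp_add field_simps)
    also have "\<dots> \<le> exp (\<alpha> * s - lam * b s)" using bnd by simp
    finally have "r < exp (\<alpha> * s - lam * b s)" .
    then show ?thesis unfolding r(1) Fd_def s_def k_def h_def using r(2) by (simp add: ennreal_less_iff)
  qed
  then show "eventually (\<lambda>n. y < Fd \<alpha> lam b x t n) sequentially"
    by (auto simp: eventually_sequentially)
qed



lemma pointwise:
  fixes b :: "real \<Rightarrow> real"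
  assumes cont: "continuous_on {0..} b" and b0: "b 0 = 0" and lf: "locfin P"
    and x': "0 \<le> x'" "x' \<le> x" and a: "0 \<le> \<alpha>" and l: "0 \<le> lam" and a0: "\<alpha> = 0 \<Longrightarrow> lam = 0"
  shows "exp_time \<alpha> (coupl_time (ratchet_S b P x) (ratchet_S b P x'))
     \<le> ennreal (exp (x * lam)) * liminf (\<lambda>t. liminf (\<lambda>n. Fd \<alpha> lam b x t n))"
proof -
  define LL where "LL = liminf (\<lambda>t. liminf (\<lambda>n. Fd \<alpha> lam b x t n))"
  define E where "E = {s. 0 \<le> s \<and> x \<le> b s}"
  have x: "0 \<le> x" using x' by simp
  have main: "exp_time \<alpha> (coupl_time (ratchet_S b P x) (ratchet_S b P x')) \<le> ennreal (exp (x * lam)) * LL"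
  proof (cases "E = {}")
    case True
    have Fb: "ennreal (exp (\<alpha> * real t - lam * x)) \<le> Fd \<alpha> lam b x t n" for t n
    proof -
      define k where "k = tau_d b x t n"
      have "\<not> x \<le> b (real k * (1 / real (Suc n)))" using True unfolding E_def by auto
      then have k: "k = t * Suc n" using tau_d_props(2)[of b x t n] unfolding k_def by auto
      then have tt: "real k * (1 / real (Suc n)) = real t" by (simp add: field_simps)
      have "\<not> x \<le> b (real t)" using True unfolding E_def by (metis (mono_tags, lifting) empty_Collect_eq of_nat_0_le_iff)
      then have "b (real t) < x" by simp
      then have "lam * b (real t) \<le> lam * x" using l by (intro mult_left_mono) auto
      then show ?thesis unfolding Fd_def k_def[symmetric] tt by simp
    qed
    have inner: "ennreal (exp (\<alpha> * real t - lam * x)) \<le> liminf (\<lambda>n. Fd \<alpha> lam b x t n)" for t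
      by (rule Liminf_bounded) (use Fb in auto)
    show ?thesis
    proof (cases "\<alpha> = 0")
      case True
      then have "lam = 0" using a0 by simp
      have "1 \<le> LL" unfolding LL_def by (rule Liminf_bounded) (use inner True \<open>lam = 0\<close> in auto)
      moreover have "exp_time \<alpha> T = 1" for T unfolding exp_time_def using True by simp
      ultimately show ?thesis using \<open>lam = 0\<close> by simp
    next
      case False
      then have apos: "\<alpha> > 0" using a by simp
      have low: "ennreal (exp (\<alpha> * real t0 - lam * x)) \<le> LL" for t0
        unfolding LL_def
      proof (rule Liminf_bounded)
        show "\<forall>\<^sub>F t in sequentially. ennreal (exp (\<alpha> * real t0 - lam * x)) \<le> liminf (\<lambda>n. Fd \<alpha> lam b x t n)"
          unfolding eventually_sequentially
        proof (intro exI allI impI)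
          fix t assume "t0 \<le> t"
          then have "\<alpha> * real t0 \<le> \<alpha> * real t" using a by (intro mult_left_mono) auto
          then have "ennreal (exp (\<alpha> * real t0 - lam * x)) \<le> ennreal (exp (\<alpha> * real t - lam * x))" by simp
          then show "ennreal (exp (\<alpha> * real t0 - lam * x)) \<le> liminf (\<lambda>n. Fd \<alpha> lam b x t n)"
            using inner order_trans by blast
        qed
      qed
      have "LL = \<top>"
      proof (rule ccontr)
        assume "LL \<noteq> \<top>"
        then obtain q where q: "LL = ennreal q" "0 \<le> q" by (cases LL) auto
        obtain t0 :: nat where t0: "(q + lam * x) / \<alpha> < real t0" using reals_Archimedean2 by blast
        have "q < \<alpha> * real t0 - lam * x" using t0 apos by (simp add: field_simps)
        also have "\<dots> < exp (\<alpha> * real t0 - lam * x)"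
          using exp_ge_add_one_self[of "\<alpha> * real t0 - lam * x"] by linarith
        finally have "ennreal q < ennreal (exp (\<alpha> * real t0 - lam * x))" using q(2) by (simp add: ennreal_less_iff)
        then show False using low[of t0] q(1) by simp
      qed
      then show ?thesis by (simp add: ennreal_mult_top)
    qed
  next
    case False
    have clE: "closed E"
    proof -
      have "closed ({0..} \<inter> b -` {x..})"
        by (rule continuous_closed_preimage[OF cont]) auto
      moreover have "E = {0..} \<inter> b -` {x..}" unfolding E_def by auto
      ultimately show ?thesis by simp
    qed
    have bddE: "bdd_below E" unfolding E_def by (auto intro: bdd_belowI[of _ 0])
    define Ts where "Ts = Inf E"
    have TsE: "Ts \<in> E" unfolding Ts_def by (rule closed_contains_Inf[OF False bddE clE])
    have hit: "Ts \<le> s" if "0 \<le> s" "x \<le> b s" for s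
      unfolding Ts_def by (rule cInf_lower) (use that bddE in \<open>auto simp: E_def\<close>)
    have Ts: "0 \<le> Ts" "x \<le> b Ts" using TsE unfolding E_def by auto
    have mx: "b r \<le> b Ts" if "0 \<le> r" "r \<le> Ts" for r
    proof (cases "r = Ts")
      case False
      then have "r < Ts" using that by simp
      then have "\<not> x \<le> b r" using hit[of r] that by auto
      then show ?thesis using Ts by simp
    qed simp
    have cle: "coupl_time (ratchet_S b P x) (ratchet_S b P x') \<le> ereal Ts"
      by (rule coupl_le[OF cont lf Ts(1) x' Ts(2) mx])
    obtain c where c: "coupl_time (ratchet_S b P x) (ratchet_S b P x') = ereal c" "0 \<le> c" "c \<le> Ts"
      using cle coupl_nonneg[of "ratchet_S b P x" "ratchet_S b P x'"]
      by (cases "coupl_time (ratchet_S b P x) (ratchet_S b P x')") auto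
    have "exp_time \<alpha> (coupl_time (ratchet_S b P x) (ratchet_S b P x')) = ennreal (exp (\<alpha> * c))"
      unfolding c(1) exp_time_def by simp
    also have "\<dots> \<le> ennreal (exp (\<alpha> * Ts))"
      using c a by (simp add: mult_left_mono)
    also have "\<dots> = ennreal (exp (x * lam)) * ennreal (exp (\<alpha> * Ts - lam * x))"
      by (simp add: ennreal_mult'[symmetric] exp_add[symmetric] algebra_simps)
    also have "ennreal (exp (\<alpha> * Ts - lam * x)) \<le> LL"
      unfolding LL_def
    proof (rule Liminf_bounded)
      obtain t0 :: nat where t0: "Ts \<le> real t0" using real_arch_simple by blast
      show "\<forall>\<^sub>F t in sequentially. ennreal (exp (\<alpha> * Ts - lam * x)) \<le> liminf (\<lambda>n. Fd \<alpha> lam b x t n)"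
        unfolding eventually_sequentially
      proof (intro exI allI impI)
        fix t assume "t0 \<le> t"
        then have "Ts \<le> real t" using t0 by (meson of_nat_le_iff order_trans)
        then show "ennreal (exp (\<alpha> * Ts - lam * x)) \<le> liminf (\<lambda>n. Fd \<alpha> lam b x t n)"
          by (rule Fd_lower[OF cont b0 x a l Ts(1) _ hit])
      qed
    qed
    then have "ennreal (exp (x * lam)) * ennreal (exp (\<alpha> * Ts - lam * x)) \<le> ennreal (exp (x * lam)) * LL"
      by (rule mult_left_mono) simp
    finally show ?thesis .
  qed
  then show ?thesis unfolding LL_def .
qed



lemma AE_locfin:
  assumes pp: "poisson_pp M \<gamma> N"
  shows "AE \<omega> in M. locfin (N \<omega>)"
proof -
  interpret prob_space M using pp unfolding poisson_pp_def by auto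
  define A where "A R = cbox (- real R, 0) (real R, real R)" for R :: nat
  have test: "ppp_test_set (A R)" for R
  proof -
    have "A R = {- real R..real R} \<times> {0..real R}" unfolding A_def cbox_Pair_eq by simp
    then have "A R \<subseteq> UNIV \<times> {0..}" by auto
    moreover have "A R \<in> sets (borel :: (real \<times> real) measure)" unfolding A_def by simp
    moreover have "emeasure (lborel :: (real \<times> real) measure) (A R) < \<infinity>"
      unfolding A_def by (rule emeasure_lborel_cbox_finite)
    ultimately show ?thesis unfolding ppp_test_set_def by simp
  qed
  have "\<forall>R. AE \<omega> in M. finite (N \<omega> \<inter> A R)" using pp test unfolding poisson_pp_def by blast
  then have ae: "AE \<omega> in M. \<forall>R. finite (N \<omega> \<inter> A R)" by (subst AE_all_countable) simp
  have sub: "\<forall>\<omega>\<in>space M. N \<omega> \<subseteq> UNIV \<times> {0..}" using pp unfolding poisson_pp_def by blast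
  show ?thesis
    using ae
  proof (rule AE_mp, intro AE_I2 impI)
    fix \<omega> assume \<omega>: "\<omega> \<in> space M" and fin: "\<forall>R. finite (N \<omega> \<inter> A R)"
    show "locfin (N \<omega>)" unfolding locfin_def
    proof
      fix R :: real
      obtain R' :: nat where R': "R \<le> real R'" using real_arch_simple by blast
      have "{p \<in> N \<omega>. \<bar>fst p\<bar> \<le> R \<and> snd p \<le> R} \<subseteq> N \<omega> \<inter> A R'"
      proof
        fix p assume p: "p \<in> {p \<in> N \<omega>. \<bar>fst p\<bar> \<le> R \<and> snd p \<le> R}"
        obtain u v where uv: "p = (u, v)" by fastforce
        have "v \<ge> 0" using sub \<omega> p uv by auto
        then show "p \<in> N \<omega> \<inter> A R'" using p uv R' unfolding A_def cbox_Pair_eq by auto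
      qed
      then show "finite {p \<in> N \<omega>. \<bar>fst p\<bar> \<le> R \<and> snd p \<le> R}"
        using fin finite_subset by blast
    qed
  qed
qed

theorem lemma2p3:
  fixes M :: "'a measure" and B :: "real \<Rightarrow> 'a \<Rightarrow> real" and N :: "'a \<Rightarrow> (real \<times> real) set"
    and \<mu> \<gamma> x x' \<alpha> :: real
  assumes "std_BM M B" and "poisson_pp M \<gamma> N" and "BM_PPP_indep M B N"
    and "\<mu> > 0" and "\<gamma> \<ge> 0" and "x' \<ge> 0" and "x \<ge> x'"
    and "0 \<le> \<alpha>" and "\<alpha> \<le> \<mu>\<^sup>2 / 2"
  shows "(\<integral>\<^sup>+ \<omega>. exp_time \<alpha>
            (coupl_time (ratchet_S (\<lambda>t. B t \<omega> + \<mu> * t) (N \<omega>) x)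
                        (ratchet_S (\<lambda>t. B t \<omega> + \<mu> * t) (N \<omega>) x')) \<partial>M)
         \<le> ennreal (exp (x * (\<mu> - sqrt (\<mu>\<^sup>2 - 2 * \<alpha>))))"
proof -
  note bm = assms(1)
  interpret prob_space M using bm unfolding std_BM_def by auto
  have Bm[measurable]: "\<And>t. B t \<in> borel_measurable M" using bm unfolding std_BM_def by auto
  define sq where "sq = sqrt (\<mu>\<^sup>2 - 2 * \<alpha>)"
  define lam where "lam = \<mu> - sq"
  have nn: "0 \<le> \<mu>\<^sup>2 - 2 * \<alpha>" using assms(9) by simp
  have sq2: "sq\<^sup>2 = \<mu>\<^sup>2 - 2 * \<alpha>" unfolding sq_def using nn by simp
  have "sq \<le> sqrt (\<mu>\<^sup>2)" unfolding sq_def using assms(8) by (intro real_sqrt_le_mono) simp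
  then have "sq \<le> \<mu>" using assms(4) by simp
  then have l: "0 \<le> lam" unfolding lam_def by simp
  have a0: "lam = 0" if "\<alpha> = 0" unfolding lam_def sq_def using that assms(4) by simp
  have eqn: "\<alpha> - lam * \<mu> + lam\<^sup>2 / 2 = 0"
  proof -
    have "(\<mu> - sq)\<^sup>2 = \<mu>\<^sup>2 - 2 * \<mu> * sq + sq\<^sup>2" by (simp add: power2_diff)
    also have "\<dots> = 2 * \<mu>\<^sup>2 - 2 * \<mu> * sq - 2 * \<alpha>" using sq2 by simp
    finally have e: "(\<mu> - sq)\<^sup>2 / 2 = \<mu>\<^sup>2 - \<mu> * sq - \<alpha>" by simp
    show ?thesis unfolding lam_def e by (simp add: power2_eq_square algebra_simps)
  qed
  define b where "b \<omega> = (\<lambda>t. B t \<omega> + \<mu> * t)" for \<omega>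
  define L where "L t \<omega> = liminf (\<lambda>n. Fd \<alpha> lam (b \<omega>) x t n)" for t \<omega>
  define LL where "LL \<omega> = liminf (\<lambda>t. L t \<omega>)" for \<omega>
  have F_m[measurable]: "(\<lambda>\<omega>. Fd \<alpha> lam (b \<omega>) x t n) \<in> borel_measurable M" for t n
  proof -
    define h where "h = 1 / real (Suc n)"
    have tm: "(\<lambda>\<omega>. tau_d (b \<omega>) x t n) \<in> measurable M (count_space UNIV)"
      unfolding tau_d_def b_def by measurable
    have "(\<lambda>\<omega>. (\<lambda>k \<omega>. ennreal (exp (\<alpha> * (real k * h) - lam * b \<omega> (real k * h)))) (tau_d (b \<omega>) x t n) \<omega>)
        \<in> borel_measurable M"
      by (rule measurable_compose_countable[OF _ tm]) (simp add: b_def)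
    then show ?thesis unfolding Fd_def h_def by simp
  qed
  have L_m[measurable]: "L t \<in> borel_measurable M" for t
    unfolding L_def by (rule borel_measurable_liminf) simp
  have LL_m: "LL \<in> borel_measurable M"
    unfolding LL_def by (rule borel_measurable_liminf) (rule L_m)
  have intF: "(\<integral>\<^sup>+\<omega>. Fd \<alpha> lam (b \<omega>) x t n \<partial>M) = 1" for t n
    using ost[OF bm _ eqn, of "1 / real (Suc n)" "t * Suc n" x] unfolding Fd_def tau_d_def b_def by simp
  have intL: "(\<integral>\<^sup>+\<omega>. L t \<omega> \<partial>M) \<le> 1" for t
  proof -
    have "(\<integral>\<^sup>+\<omega>. L t \<omega> \<partial>M) \<le> liminf (\<lambda>n. \<integral>\<^sup>+\<omega>. Fd \<alpha> lam (b \<omega>) x t n \<partial>M)"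
      unfolding L_def by (rule nn_integral_liminf) simp
    also have "\<dots> = 1" using intF by (simp add: Liminf_const)
    finally show ?thesis .
  qed
  have intLL: "(\<integral>\<^sup>+\<omega>. LL \<omega> \<partial>M) \<le> 1"
  proof -
    have "(\<integral>\<^sup>+\<omega>. LL \<omega> \<partial>M) \<le> liminf (\<lambda>t. \<integral>\<^sup>+\<omega>. L t \<omega> \<partial>M)"
      unfolding LL_def by (rule nn_integral_liminf) (rule L_m)
    also have "\<dots> \<le> 1" by (rule Liminf_le) (use intL in auto)
    finally show ?thesis .
  qed
  have pw: "AE \<omega> in M. exp_time \<alpha> (coupl_time (ratchet_S (\<lambda>t. B t \<omega> + \<mu> * t) (N \<omega>) x)
                        (ratchet_S (\<lambda>t. B t \<omega> + \<mu> * t) (N \<omega>) x')) \<le> ennreal (exp (x * lam)) * LL \<omega>"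
    using AE_locfin[OF assms(2)]
  proof (rule AE_mp, intro AE_I2 impI)
    fix \<omega> assume \<omega>: "\<omega> \<in> space M" and lf: "locfin (N \<omega>)"
    have c: "continuous_on {0..} (\<lambda>t. B t \<omega>)" "B 0 \<omega> = 0" using bm \<omega> unfolding std_BM_def by auto
    have cont: "continuous_on {0..} (b \<omega>)" unfolding b_def by (intro continuous_intros c(1))
    have b0: "b \<omega> 0 = 0" unfolding b_def using c(2) by simp
    show "exp_time \<alpha> (coupl_time (ratchet_S (\<lambda>t. B t \<omega> + \<mu> * t) (N \<omega>) x)
                        (ratchet_S (\<lambda>t. B t \<omega> + \<mu> * t) (N \<omega>) x')) \<le> ennreal (exp (x * lam)) * LL \<omega>"
      using pointwise[OF cont b0 lf assms(6) assms(7) assms(8) l a0] unfolding LL_def L_def b_def by simp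
  qed
  have "(\<integral>\<^sup>+ \<omega>. exp_time \<alpha>
            (coupl_time (ratchet_S (\<lambda>t. B t \<omega> + \<mu> * t) (N \<omega>) x)
                        (ratchet_S (\<lambda>t. B t \<omega> + \<mu> * t) (N \<omega>) x')) \<partial>M)
      \<le> (\<integral>\<^sup>+\<omega>. ennreal (exp (x * lam)) * LL \<omega> \<partial>M)"
    by (rule nn_integral_mono_AE[OF pw])
  also have "\<dots> = ennreal (exp (x * lam)) * (\<integral>\<^sup>+\<omega>. LL \<omega> \<partial>M)"
    by (rule nn_integral_cmult[OF LL_m])
  also have "\<dots> \<le> ennreal (exp (x * lam)) * 1"
    by (rule mult_left_mono[OF intLL]) simp
  finally show ?thesis unfolding lam_def sq_def by simp
qed


end
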